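(* Let $S_X,S_Y$ be finite nonempty action sets and $u_X,u_Y:S_X\times S_Y\to\mathbb{R}$ the stage-game payoff functions of $X$ and $Y$. There exists a zero-sum autocratic strategy for player $X$ (i.e., $u_X+u_Y\equiv0$ is enforceable) if and only if there exist $\tau_X^+,\tau_X^-\in\Delta(S_X)$ such that $u_X(\tau_X^+,s_Y)\ge-u_Y(\tau_X^+,s_Y)$ and $u_X(\tau_X^-,s_Y)\le-u_Y(\tau_X^-,s_Y)$ for all $s_Y\in S_Y$.
   Context: Two players $X,Y$ play a repeated game with finite action sets $S_X,S_Y$; $\Delta(S)$ denotes the probability distributions on $S$; functions on $S_X\times S_Y$ are extended to mixed actions in the first argument by $f(\tau_X,s_Y)=\mathbb{E}_{s_X\sim\tau_X}[f(s_X,s_Y)]$. Histories: $\mathcal{H}=\bigcup_{T\ge0}(S_X\times S_Y)^T$; behavioral strategies are maps $\sigma:\mathcal{H}\to\Delta(S)$; players independently draw actions each round from their strategies evaluated at the history of realized action pairs, with $\mathbb{E}_{\sigma_X,\sigma_Y}$ the expectation over the resulting play. For $\varphi:S_X\times S_Y\to\mathbb{R}$ and $\lambda\in[0,1)$, $\sigma_X$ is $(\varphi,\lambda)$-autocratic if for every behavioral strategy $\sigma_Y$, $\mathbb{E}_{\sigma_X,\sigma_Y}[(1-\lambda)\sum_{t\ge0}\lambda^t\varphi(s_X^t,s_Y^t)]=0$; it is $(\varphi,1)$-autocratic if for every $\sigma_Y$ the limit $\lim_{T\to\infty}\frac1{T+1}\sum_{t=0}^T\mathbb{E}_{\sigma_X,\sigma_Y}[\varphi(s_X^t,s_Y^t)]$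 exists and equals $0$. A zero-sum autocratic strategy is a behavioral strategy of $X$ that is $(u_X+u_Y,\lambda)$-autocratic for some $\lambda\in[0,1]$, i.e., enforces $\pi_X=-\pi_Y$ in expectation. *)

theory Defs
  imports "HOL-Probability.Probability_Mass_Function"
begin

text \<open>Action sets are finite types 'a (player X) and 'b (player Y); types are nonempty.
Histories are lists of realized action pairs in chronological order.\<close>

type_synonym ('a, 'b) history = "('a \<times> 'b) list"

definition mixed_ext :: "('a::finite \<Rightarrow> 'b \<Rightarrow> real) \<Rightarrow> 'a pmf \<Rightarrow> 'b \<Rightarrow> real" where
  "mixed_ext f \<tau> b = (\<Sum>a\<in>UNIV. pmf \<tau> a * f a b)"

definition hist_prob ::
  "(('a, 'b) history \<Rightarrow> 'a pmf) \<Rightarrow> (('a, 'b) history \<Rightarrow> 'b pmf) \<Rightarrow> ('a, 'b) history \<Rightarrow> real" where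
  "hist_prob \<sigma>X \<sigma>Y h =
     (\<Prod>k<length h. pmf (\<sigma>X (take k h)) (fst (h ! k)) * pmf (\<sigma>Y (take k h)) (snd (h ! k)))"

definition stage_exp ::
  "(('a::finite, 'b::finite) history \<Rightarrow> 'a pmf) \<Rightarrow> (('a, 'b) history \<Rightarrow> 'b pmf)
    \<Rightarrow> ('a \<Rightarrow> 'b \<Rightarrow> real) \<Rightarrow> nat \<Rightarrow> real" where
  "stage_exp \<sigma>X \<sigma>Y \<phi> t =
     (\<Sum>h\<in>{h::('a, 'b) history. length h = t}.
        hist_prob \<sigma>X \<sigma>Y h *
        (\<Sum>a\<in>UNIV. \<Sum>b\<in>UNIV. pmf (\<sigma>X h) a * pmf (\<sigma>Y h) b * \<phi> a b))"

definition autocratic ::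
  "('a::finite \<Rightarrow> 'b::finite \<Rightarrow> real) \<Rightarrow> real \<Rightarrow> (('a, 'b) history \<Rightarrow> 'a pmf) \<Rightarrow> bool" where
  "autocratic \<phi> lam \<sigma>X \<longleftrightarrow>
     (0 \<le> lam \<and> lam < 1 \<and>
        (\<forall>\<sigma>Y :: ('a, 'b) history \<Rightarrow> 'b pmf.
           (1 - lam) * (\<Sum>t. lam ^ t * stage_exp \<sigma>X \<sigma>Y \<phi> t) = 0))
   \<or> (lam = 1 \<and>
        (\<forall>\<sigma>Y :: ('a, 'b) history \<Rightarrow> 'b pmf.
           (\<lambda>T. (\<Sum>t\<le>T. stage_exp \<sigma>X \<sigma>Y \<phi> t) / real (T + 1)) \<longlonglongrightarrow> 0))"

definition zero_sum_autocratic ::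
  "('a::finite \<Rightarrow> 'b::finite \<Rightarrow> real) \<Rightarrow> ('a \<Rightarrow> 'b \<Rightarrow> real) \<Rightarrow> (('a, 'b) history \<Rightarrow> 'a pmf) \<Rightarrow> bool" where
  "zero_sum_autocratic uX uY \<sigma>X \<longleftrightarrow>
     (\<exists>lam. 0 \<le> lam \<and> lam \<le> 1 \<and> autocratic (\<lambda>a b. uX a b + uY a b) lam \<sigma>X)"

end

theory Submission
  imports Defs "HOL-Analysis.Analysis"
begin


lemma hist_prob_snoc:
  "hist_prob sX sY (h @ [x]) = hist_prob sX sY h * (pmf (sX h) (fst x) * pmf (sY h) (snd x))"
proof -
  have "hist_prob sX sY (h @ [x]) =
     (\<Prod>k<Suc (length h). pmf (sX (take k (h@[x]))) (fst ((h@[x]) ! k)) * pmf (sY (take k (h@[x]))) (snd ((h@[x]) ! k)))"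
    by (simp add: hist_prob_def)
  also have "\<dots> = (\<Prod>k<length h. pmf (sX (take k h)) (fst (h ! k)) * pmf (sY (take k h)) (snd (h ! k)))
       * (pmf (sX h) (fst x) * pmf (sY h) (snd x))"
    by (simp add: prod.lessThan_Suc nth_append)
  finally show ?thesis by (simp add: hist_prob_def)
qed

lemma hist_prob_nonneg: "hist_prob sX sY h \<ge> 0"
  by (simp add: hist_prob_def prod_nonneg)

lemma sum_len_Suc:
  fixes f :: "('x::finite) list \<Rightarrow> real"
  shows "(\<Sum>h\<in>{h. length h = Suc n}. f h) = (\<Sum>h\<in>{h. length h = n}. \<Sum>x\<in>UNIV. f (h @ [x]))"
proof -
  have fin: "finite {h::'x list. length h = n}" using finite_lists_length_eq[of "UNIV::'x set" n] by simp
  have inj: "inj_on (\<lambda>(h, x). h @ [x]) ({h::'x list. length h = n} \<times> UNIV)"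
    by (auto simp: inj_on_def)
  have img: "(\<lambda>(h, x). h @ [x]) ` ({h::'x list. length h = n} \<times> UNIV) = {h. length h = Suc n}"
  proof (auto)
    fix h :: "'x list" assume "length h = Suc n"
    then show "h \<in> (\<lambda>(h, x). h @ [x]) ` ({h. length h = n} \<times> UNIV)"
      by (intro image_eqI[of _ _ "(butlast h, last h)"]) (auto, metis append_butlast_last_id list.size(3) nat.distinct(1))
  qed
  have "(\<Sum>h\<in>{h. length h = Suc n}. f h) = (\<Sum>p\<in>{h::'x list. length h = n} \<times> UNIV. f (fst p @ [snd p]))"
    by (subst img[symmetric], subst sum.reindex[OF inj]) (simp add: case_prod_beta)
  also have "\<dots> = (\<Sum>h\<in>{h. length h = n}. \<Sum>x\<in>UNIV. f (h @ [x]))"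
    by (subst sum.cartesian_product) (simp add: case_prod_beta)
  finally show ?thesis .
qed

lemma sum_pair_UNIV:
  fixes g :: "'a::finite \<times> 'b::finite \<Rightarrow> real"
  shows "(\<Sum>x\<in>UNIV. g x) = (\<Sum>a\<in>UNIV. \<Sum>b\<in>UNIV. g (a, b))"
proof -
  have "(\<Sum>a\<in>UNIV. \<Sum>b\<in>UNIV. g (a, b)) = (\<Sum>(a,b)\<in>UNIV\<times>UNIV. g (a, b))"
    by (rule sum.cartesian_product)
  then show ?thesis by simp
qed

lemma pmf_sum1: "(\<Sum>a\<in>(UNIV::'a::finite set). pmf p a) = 1"
  by (rule sum_pmf_eq_1) auto

lemma hist_prob_sum:
  fixes sX :: "('a::finite, 'b::finite) history \<Rightarrow> 'a pmf"
  shows "(\<Sum>h\<in>{h::('a,'b) history. length h = n}. hist_prob sX sY h) = 1"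
proof (induction n)
  case 0
  then show ?case by (simp add: hist_prob_def)
next
  case (Suc n)
  have "(\<Sum>h\<in>{h::('a,'b) history. length h = Suc n}. hist_prob sX sY h)
     = (\<Sum>h\<in>{h::('a,'b) history. length h = n}. \<Sum>a\<in>UNIV. \<Sum>b\<in>UNIV.
          hist_prob sX sY h * (pmf (sX h) a * pmf (sY h) b))"
    by (simp add: sum_len_Suc sum_pair_UNIV hist_prob_snoc)
  also have "\<dots> = (\<Sum>h\<in>{h::('a,'b) history. length h = n}. hist_prob sX sY h)"
    by (simp add: sum_distrib_left[symmetric] sum_distrib_right[symmetric] pmf_sum1)
  finally show ?case using Suc by simp
qed

lemma inner_swap:
  fixes P :: "'a::finite \<Rightarrow> real" and Q :: "'b::finite \<Rightarrow> real"
  shows "(\<Sum>a\<in>UNIV. \<Sum>b\<in>UNIV. P a * Q b * \<phi> a b) = (\<Sum>b\<in>UNIV. Q b * (\<Sum>a\<in>UNIV. P a * \<phi> a b))"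
  by (subst sum.swap) (simp add: sum_distrib_left mult_ac)

lemma stage_exp_alt:
  "stage_exp sX sY \<phi> t = (\<Sum>h\<in>{h::('a::finite,'b::finite) history. length h = t}.
       hist_prob sX sY h * (\<Sum>b\<in>UNIV. pmf (sY h) b * mixed_ext \<phi> (sX h) b))"
  unfolding stage_exp_def mixed_ext_def by (simp add: inner_swap)

lemma stage_exp_bound:
  fixes sX :: "('a::finite, 'b::finite) history \<Rightarrow> 'a pmf"
  shows "\<bar>stage_exp sX sY \<phi> t\<bar> \<le> (\<Sum>a\<in>UNIV. \<Sum>b\<in>UNIV. \<bar>\<phi> a b\<bar>)"
proof -
  let ?B = "(\<Sum>a\<in>UNIV. \<Sum>b\<in>UNIV. \<bar>\<phi> a b\<bar>)"
  have inner: "\<bar>\<Sum>a\<in>UNIV. \<Sum>b\<in>UNIV. pmf (sX h) a * pmf (sY h) b * \<phi> a b\<bar> \<le> ?B" for h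
  proof -
    have "\<bar>\<Sum>a\<in>UNIV. \<Sum>b\<in>UNIV. pmf (sX h) a * pmf (sY h) b * \<phi> a b\<bar>
        \<le> (\<Sum>a\<in>UNIV. \<bar>\<Sum>b\<in>UNIV. pmf (sX h) a * pmf (sY h) b * \<phi> a b\<bar>)" by (rule sum_abs)
    also have "\<dots> \<le> (\<Sum>a\<in>UNIV. \<Sum>b\<in>UNIV. \<bar>pmf (sX h) a * pmf (sY h) b * \<phi> a b\<bar>)"
      by (intro sum_mono sum_abs)
    also have "\<dots> \<le> ?B"
    proof (intro sum_mono)
      fix a b
      have "\<bar>pmf (sX h) a * pmf (sY h) b * \<phi> a b\<bar> = pmf (sX h) a * pmf (sY h) b * \<bar>\<phi> a b\<bar>"
        by (simp add: abs_mult)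
      also have "\<dots> \<le> 1 * 1 * \<bar>\<phi> a b\<bar>"
        by (intro mult_right_mono mult_mono pmf_le_1) auto
      finally show "\<bar>pmf (sX h) a * pmf (sY h) b * \<phi> a b\<bar> \<le> \<bar>\<phi> a b\<bar>" by simp
    qed
    finally show ?thesis .
  qed
  have "\<bar>stage_exp sX sY \<phi> t\<bar> \<le> (\<Sum>h\<in>{h::('a,'b) history. length h = t}.
        \<bar>hist_prob sX sY h * (\<Sum>a\<in>UNIV. \<Sum>b\<in>UNIV. pmf (sX h) a * pmf (sY h) b * \<phi> a b)\<bar>)"
    unfolding stage_exp_def by (rule sum_abs)
  also have "\<dots> \<le> (\<Sum>h\<in>{h::('a,'b) history. length h = t}. hist_prob sX sY h * ?B)"
    by (intro sum_mono) (simp add: abs_mult hist_prob_nonneg inner mult_left_mono)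
  also have "\<dots> = ?B" by (simp add: sum_distrib_right[symmetric] hist_prob_sum)
  finally show ?thesis .
qed

lemma Min_cont:
  fixes f :: "'b \<Rightarrow> real^'a \<Rightarrow> real"
  assumes "finite B" "B \<noteq> {}" "\<And>b. continuous_on UNIV (f b)"
  shows "continuous_on UNIV (\<lambda>p. Min ((\<lambda>b. f b p) ` B))"
  using assms(1,2)
proof (induction B rule: finite_ne_induct)
  case (singleton x)
  then show ?case using assms(3) by simp
next
  case (insert x F)
  have "(\<lambda>p. Min ((\<lambda>b. f b p) ` insert x F)) = (\<lambda>p. min (f x p) (Min ((\<lambda>b. f b p) ` F)))"
    using insert by (auto simp: Min_insert)
  then show ?case using insert assms(3) by (simp add: continuous_on_min)
qed

lemma uniform_neg:
  fixes \<phi> :: "'a::finite \<Rightarrow> 'b::finite \<Rightarrow> real"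
  assumes H: "\<forall>\<tau>::'a pmf. \<exists>b. mixed_ext \<phi> \<tau> b < 0"
  shows "\<exists>\<epsilon>>0. \<forall>\<tau>::'a pmf. \<exists>b. mixed_ext \<phi> \<tau> b \<le> - \<epsilon>"
proof -
  define S where "S = {p::real^'a. (\<forall>i. 0 \<le> p$i) \<and> (\<Sum>i\<in>UNIV. p$i) = 1}"
  define f where "f b p = (\<Sum>a\<in>UNIV. p$a * \<phi> a b)" for b p
  define g where "g p = Min ((\<lambda>b. f b p) ` UNIV)" for p
  have fc: "continuous_on UNIV (f b)" for b unfolding f_def by (intro continuous_intros)
  have gc: "continuous_on S g"
    using Min_cont[of UNIV f, OF _ _ fc] unfolding g_def by (auto intro: continuous_on_subset)
  have cl: "closed S" unfolding S_def
    by (intro closed_Collect_conj closed_Collect_all closed_Collect_le closed_Collect_eq continuous_intros)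
  have sub: "S \<subseteq> cbox 0 (\<chi> i. 1)"
  proof
    fix p assume p: "p \<in> S"
    have "p$i \<le> 1" for i
    proof -
      have "p$i \<le> (\<Sum>j\<in>UNIV. p$j)" using p by (intro member_le_sum) (auto simp: S_def)
      then show ?thesis using p by (simp add: S_def)
    qed
    then show "p \<in> cbox 0 (\<chi> i. 1)" using p by (simp add: mem_box_cart S_def)
  qed
  have "compact (S \<inter> cbox 0 (\<chi> i. 1))" using cl by (intro closed_Int_compact) auto
  then have cpt: "compact S" using sub by (simp add: Int_absorb2)
  define v where "v \<tau> = (\<chi> a. pmf \<tau> a)" for \<tau> :: "'a pmf"
  have vS: "v \<tau> \<in> S" for \<tau> unfolding v_def S_def using pmf_sum1[of \<tau>] by simp
  have fv: "f b (v \<tau>) = mixed_ext \<phi> \<tau> b" for b \<tau> unfolding f_def v_def mixed_ext_def by simp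
  obtain p0 where p0: "p0 \<in> S" "\<And>y. y \<in> S \<Longrightarrow> g y \<le> g p0"
    using continuous_attains_sup[OF cpt _ gc] vS by blast
  define \<tau>0 where "\<tau>0 = embed_pmf (\<lambda>a. p0$a)"
  have nn: "\<And>a. 0 \<le> p0$a" using p0(1) by (simp add: S_def)
  have int1: "(\<integral>\<^sup>+x. ennreal (p0$x) \<partial>count_space UNIV) = 1"
    using p0(1) nn by (simp add: nn_integral_count_space_finite S_def)
  have pt0: "pmf \<tau>0 a = p0$a" for a unfolding \<tau>0_def using pmf_embed_pmf[OF nn int1] by simp
  have "v \<tau>0 = p0" unfolding v_def by (simp add: pt0 vec_eq_iff)
  obtain b0 where "mixed_ext \<phi> \<tau>0 b0 < 0" using H by blast
  then have "f b0 p0 < 0" using fv \<open>v \<tau>0 = p0\<close> by metis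
  moreover have "g p0 \<le> f b0 p0" unfolding g_def by (rule Min_le) auto
  ultimately have gneg: "g p0 < 0" by linarith
  show ?thesis
  proof (intro exI[of _ "- g p0"] conjI allI)
    show "0 < - g p0" using gneg by simp
    fix \<tau> :: "'a pmf"
    have "g (v \<tau>) \<in> (\<lambda>b. f b (v \<tau>)) ` UNIV" unfolding g_def by (intro Min_in) auto
    then obtain b where "g (v \<tau>) = f b (v \<tau>)" by blast
    then have "mixed_ext \<phi> \<tau> b \<le> g p0" using p0(2)[OF vS] fv by metis
    then show "\<exists>b. mixed_ext \<phi> \<tau> b \<le> - (- g p0)" by auto
  qed
qed



lemma summ_disc:
  fixes sX :: "('a::finite, 'b::finite) history \<Rightarrow> 'a pmf"
  assumes l0: "0 \<le> lam" and l1: "lam < 1"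
  shows "summable (\<lambda>t. lam ^ t * stage_exp sX sY \<phi> t)"
proof (rule summable_comparison_test')
  have nl: "norm lam < 1" using l0 l1 by simp
  show "summable (\<lambda>t. lam ^ t * (\<Sum>a\<in>UNIV. \<Sum>b\<in>UNIV. \<bar>\<phi> a b\<bar>))"
    using summable_geometric[OF nl] by (rule summable_mult2)
  fix n :: nat
  show "norm (lam ^ n * stage_exp sX sY \<phi> n) \<le> lam ^ n * (\<Sum>a\<in>UNIV. \<Sum>b\<in>UNIV. \<bar>\<phi> a b\<bar>)"
    using stage_exp_bound[of sX sY \<phi> n] l0 by (simp add: abs_mult mult_left_mono)
qed

lemma fwd:
  fixes \<phi> :: "'a::finite \<Rightarrow> 'b::finite \<Rightarrow> real"
  assumes aut: "autocratic \<phi> lam sX"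
  shows "\<exists>\<tau>::'a pmf. \<forall>b. mixed_ext \<phi> \<tau> b \<ge> 0"
proof (rule ccontr)
  assume "\<not> ?thesis"
  then have "\<forall>\<tau>::'a pmf. \<exists>b. mixed_ext \<phi> \<tau> b < 0" by (auto simp: not_le)
  from uniform_neg[OF this] obtain \<epsilon> where eps: "\<epsilon> > 0" "\<And>\<tau>::'a pmf. \<exists>b. mixed_ext \<phi> \<tau> b \<le> - \<epsilon>"
    by blast
  define bsel where "bsel h = (SOME b. mixed_ext \<phi> (sX h) b \<le> - \<epsilon>)" for h :: "('a,'b) history"
  have bs: "mixed_ext \<phi> (sX h) (bsel h) \<le> - \<epsilon>" for h
    unfolding bsel_def using eps(2) by (rule someI_ex)
  define sY where "sY h = return_pmf (bsel h)" for h :: "('a,'b) history"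
  have inner: "(\<Sum>b\<in>UNIV. pmf (sY h) b * mixed_ext \<phi> (sX h) b) = mixed_ext \<phi> (sX h) (bsel h)" for h
  proof -
    have "(\<Sum>b\<in>UNIV. pmf (sY h) b * mixed_ext \<phi> (sX h) b)
        = (\<Sum>b\<in>UNIV. (if b = bsel h then mixed_ext \<phi> (sX h) b else 0))"
      by (intro sum.cong) (auto simp: sY_def pmf_return)
    also have "\<dots> = mixed_ext \<phi> (sX h) (bsel h)" by simp
    finally show ?thesis .
  qed
  have st: "stage_exp sX sY \<phi> t \<le> - \<epsilon>" for t
  proof -
    have "stage_exp sX sY \<phi> t = (\<Sum>h\<in>{h::('a,'b) history. length h = t}.
       hist_prob sX sY h * mixed_ext \<phi> (sX h) (bsel h))"
      by (simp add: stage_exp_alt inner)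
    also have "\<dots> \<le> (\<Sum>h\<in>{h::('a,'b) history. length h = t}. hist_prob sX sY h * (- \<epsilon>))"
      by (intro sum_mono mult_left_mono bs hist_prob_nonneg)
    also have "\<dots> = - \<epsilon>" by (simp only: sum_distrib_right[symmetric] hist_prob_sum mult_1)
    finally show ?thesis .
  qed
  let ?B = "(\<Sum>a\<in>UNIV. \<Sum>b\<in>UNIV. \<bar>\<phi> a b\<bar>)"
  from aut show False unfolding autocratic_def
  proof (elim disjE conjE)
    assume l0: "0 \<le> lam" and l1: "lam < 1"
      and z: "\<forall>\<sigma>Y :: ('a, 'b) history \<Rightarrow> 'b pmf. (1 - lam) * (\<Sum>t. lam ^ t * stage_exp sX \<sigma>Y \<phi> t) = 0"
    have nl: "norm lam < 1" using l0 l1 by simp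
    have sg: "summable (\<lambda>t. lam ^ t * (- \<epsilon>))"
      using summable_geometric[OF nl] by (rule summable_mult2)
    have sf: "summable (\<lambda>t. lam ^ t * stage_exp sX sY \<phi> t)"
    proof (rule summable_comparison_test')
      show "summable (\<lambda>t. lam ^ t * ?B)" using summable_geometric[OF nl] by (rule summable_mult2)
      fix n :: nat
      show "norm (lam ^ n * stage_exp sX sY \<phi> n) \<le> lam ^ n * ?B"
        using stage_exp_bound[of sX sY \<phi> n] l0 by (simp add: abs_mult mult_left_mono)
    qed
    have "(\<Sum>t. lam ^ t * stage_exp sX sY \<phi> t) \<le> (\<Sum>t. lam ^ t * (- \<epsilon>))"
    proof (rule suminf_le[OF _ sf sg])
      fix n
      show "lam ^ n * stage_exp sX sY \<phi> n \<le> lam ^ n * (- \<epsilon>)"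
        using st[of n] l0 by (intro mult_left_mono) auto
    qed
    also have "\<dots> = (\<Sum>t. lam ^ t) * (- \<epsilon>)" by (rule suminf_mult2[OF summable_geometric[OF nl], symmetric])
    also have "\<dots> = - \<epsilon> / (1 - lam)" using suminf_geometric[OF nl] by simp
    also have "\<dots> < 0" using eps(1) l1 by simp
    finally have "(1 - lam) * (\<Sum>t. lam ^ t * stage_exp sX sY \<phi> t) < 0"
      using l1 by (simp add: mult_pos_neg)
    then show False using z by simp
  next
    assume z: "\<forall>\<sigma>Y :: ('a, 'b) history \<Rightarrow> 'b pmf.
           (\<lambda>T. (\<Sum>t\<le>T. stage_exp sX \<sigma>Y \<phi> t) / real (T + 1)) \<longlonglongrightarrow> 0"
    have avg: "(\<Sum>t\<le>T. stage_exp sX sY \<phi> t) / real (T + 1) \<le> - \<epsilon>" for T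
    proof -
      have "(\<Sum>t\<le>T. stage_exp sX sY \<phi> t) \<le> (\<Sum>t\<le>T. - \<epsilon>)" by (intro sum_mono st)
      also have "\<dots> = real (T + 1) * (- \<epsilon>)" by simp
      finally show ?thesis by (simp add: divide_le_eq mult.commute)
    qed
    have "0 \<le> - \<epsilon>" by (rule LIMSEQ_le_const2[OF z[rule_format, of sY]]) (use avg in blast)
    then show False using eps(1) by simp
  qed
qed



lemma bwd:
  fixes \<phi> :: "'a::finite \<Rightarrow> 'b::finite \<Rightarrow> real"
  assumes hp: "\<And>b. mixed_ext \<phi> \<tau>p b \<ge> 0" and hm: "\<And>b. mixed_ext \<phi> \<tau>m b \<le> 0"
  shows "\<exists>sX :: ('a,'b) history \<Rightarrow> 'a pmf. autocratic \<phi> 1 sX"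
proof -
  define stp where "stp d x = d + mixed_ext \<phi> (if d < 0 then \<tau>p else \<tau>m) (snd x)"
    for d :: real and x :: "'a \<times> 'b"
  define D where "D h = foldl stp 0 h" for h :: "('a,'b) history"
  define sX where "sX h = (if D h < 0 then \<tau>p else \<tau>m)" for h :: "('a,'b) history"
  have Dsnoc: "D (h @ [x]) = D h + mixed_ext \<phi> (sX h) (snd x)" for h x
    by (simp add: D_def sX_def stp_def)
  define M where "M = (\<Sum>b\<in>UNIV. \<bar>mixed_ext \<phi> \<tau>p b\<bar>) + (\<Sum>b\<in>UNIV. \<bar>mixed_ext \<phi> \<tau>m b\<bar>)"
  have Mp: "\<bar>mixed_ext \<phi> \<tau>p b\<bar> \<le> M" for b
  proof -
    have "\<bar>mixed_ext \<phi> \<tau>p b\<bar> \<le> (\<Sum>b\<in>UNIV. \<bar>mixed_ext \<phi> \<tau>p b\<bar>)" by (rule member_le_sum) auto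
    moreover have "0 \<le> (\<Sum>b\<in>UNIV. \<bar>mixed_ext \<phi> \<tau>m b\<bar>)" by (rule sum_nonneg) auto
    ultimately show ?thesis unfolding M_def by linarith
  qed
  have Mm: "\<bar>mixed_ext \<phi> \<tau>m b\<bar> \<le> M" for b
  proof -
    have "\<bar>mixed_ext \<phi> \<tau>m b\<bar> \<le> (\<Sum>b\<in>UNIV. \<bar>mixed_ext \<phi> \<tau>m b\<bar>)" by (rule member_le_sum) auto
    moreover have "0 \<le> (\<Sum>b\<in>UNIV. \<bar>mixed_ext \<phi> \<tau>p b\<bar>)" by (rule sum_nonneg) auto
    ultimately show ?thesis unfolding M_def by linarith
  qed
  have M0: "0 \<le> M" using Mp[of undefined] by linarith
  have Dbd: "\<bar>D h\<bar> \<le> M" for h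
  proof (induction h rule: rev_induct)
    case Nil
    then show ?case using M0 by (simp add: D_def)
  next
    case (snoc x xs)
    show ?case
    proof (cases "D xs < 0")
      case True
      then show ?thesis using snoc hp[of "snd x"] Mp[of "snd x"] by (simp add: Dsnoc sX_def abs_le_iff)
    next
      case False
      then show ?thesis using snoc hm[of "snd x"] Mm[of "snd x"] by (simp add: Dsnoc sX_def abs_le_iff)
    qed
  qed
  have key: "(\<Sum>t<T. stage_exp sX sY \<phi> t) =
      (\<Sum>h\<in>{h::('a,'b) history. length h = T}. hist_prob sX sY h * D h)" for sY T
  proof (induction T)
    case 0
    then show ?case by (simp add: D_def)
  next
    case (Suc T)
    have inner: "(\<Sum>a\<in>UNIV. \<Sum>b\<in>UNIV. c * (pmf (sX h) a * pmf (sY h) b) * (D h + mixed_ext \<phi> (sX h) b))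
       = c * D h + c * (\<Sum>b\<in>UNIV. pmf (sY h) b * mixed_ext \<phi> (sX h) b)" for c h
    proof -
      have "(\<Sum>a\<in>UNIV. \<Sum>b\<in>UNIV. c * (pmf (sX h) a * pmf (sY h) b) * (D h + mixed_ext \<phi> (sX h) b))
         = (\<Sum>a\<in>UNIV. c * pmf (sX h) a * (\<Sum>b\<in>UNIV. pmf (sY h) b * (D h + mixed_ext \<phi> (sX h) b)))"
        by (simp add: sum_distrib_left mult_ac)
      also have "(\<Sum>b\<in>UNIV. pmf (sY h) b * (D h + mixed_ext \<phi> (sX h) b))
          = D h + (\<Sum>b\<in>UNIV. pmf (sY h) b * mixed_ext \<phi> (sX h) b)"
        by (simp add: distrib_left sum.distrib sum_distrib_right[symmetric] pmf_sum1)
      also have "(\<Sum>a\<in>UNIV. c * pmf (sX h) a * (D h + (\<Sum>b\<in>UNIV. pmf (sY h) b * mixed_ext \<phi> (sX h) b)))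
          = c * (D h + (\<Sum>b\<in>UNIV. pmf (sY h) b * mixed_ext \<phi> (sX h) b))"
        by (simp add: sum_distrib_right[symmetric] sum_distrib_left[symmetric] pmf_sum1)
      finally show ?thesis by (simp add: distrib_left)
    qed
    have "(\<Sum>h\<in>{h::('a,'b) history. length h = Suc T}. hist_prob sX sY h * D h)
      = (\<Sum>h\<in>{h::('a,'b) history. length h = T}. \<Sum>a\<in>UNIV. \<Sum>b\<in>UNIV.
           hist_prob sX sY h * (pmf (sX h) a * pmf (sY h) b) * (D h + mixed_ext \<phi> (sX h) b))"
      by (simp add: sum_len_Suc sum_pair_UNIV hist_prob_snoc Dsnoc)
    also have "\<dots> = (\<Sum>h\<in>{h::('a,'b) history. length h = T}. hist_prob sX sY h * D h)
        + stage_exp sX sY \<phi> T"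
      by (simp add: inner sum.distrib stage_exp_alt)
    finally show ?case using Suc by simp
  qed
  have bd: "\<bar>(\<Sum>t\<le>T. stage_exp sX sY \<phi> t)\<bar> \<le> M" for sY T
  proof -
    have "\<bar>(\<Sum>t\<le>T. stage_exp sX sY \<phi> t)\<bar> =
       \<bar>\<Sum>h\<in>{h::('a,'b) history. length h = Suc T}. hist_prob sX sY h * D h\<bar>"
    proof -
      have e: "(\<Sum>t\<le>T. stage_exp sX sY \<phi> t) = (\<Sum>t<Suc T. stage_exp sX sY \<phi> t)"
        by (simp add: lessThan_Suc_atMost)
      show ?thesis by (simp only: e key)
    qed
    also have "\<dots> \<le> (\<Sum>h\<in>{h::('a,'b) history. length h = Suc T}. \<bar>hist_prob sX sY h * D h\<bar>)"
      by (rule sum_abs)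
    also have "\<dots> \<le> (\<Sum>h\<in>{h::('a,'b) history. length h = Suc T}. hist_prob sX sY h * M)"
      by (intro sum_mono) (simp add: abs_mult hist_prob_nonneg Dbd mult_left_mono)
    also have "\<dots> = M" by (simp add: sum_distrib_right[symmetric] hist_prob_sum)
    finally show ?thesis .
  qed
  have "autocratic \<phi> 1 sX"
    unfolding autocratic_def
  proof (intro disjI2 conjI refl allI)
    fix sY :: "('a,'b) history \<Rightarrow> 'b pmf"
    have lim: "(\<lambda>T. M * inverse (real (Suc T))) \<longlonglongrightarrow> 0"
      using tendsto_mult[OF tendsto_const[of M] LIMSEQ_inverse_real_of_nat] by simp
    show "(\<lambda>T. (\<Sum>t\<le>T. stage_exp sX sY \<phi> t) / real (T + 1)) \<longlonglongrightarrow> 0"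
    proof (rule Lim_null_comparison[OF _ lim], rule always_eventually, rule allI)
      fix T
      show "norm ((\<Sum>t\<le>T. stage_exp sX sY \<phi> t) / real (T + 1)) \<le> M * inverse (real (Suc T))"
        using bd[of sY T] by (simp add: divide_inverse abs_mult mult_right_mono)
    qed
  qed
  then show ?thesis by blast
qed

lemma mixed_ext_add: "mixed_ext (\<lambda>a b. f a b + g a b) \<tau> b = mixed_ext f \<tau> b + mixed_ext g \<tau> b"
  by (simp add: mixed_ext_def distrib_left sum.distrib)

lemma mixed_ext_neg: "mixed_ext (\<lambda>a b. - f a b) \<tau> b = - mixed_ext f \<tau> b"
  by (simp add: mixed_ext_def sum_negf)

lemma stage_exp_neg: "stage_exp sX sY (\<lambda>a b. - f a b) t = - stage_exp sX sY f t"
  by (simp add: stage_exp_def sum_negf)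

lemma autocratic_neg:
  fixes \<phi> :: "'a::finite \<Rightarrow> 'b::finite \<Rightarrow> real" and sX :: "('a, 'b) history \<Rightarrow> 'a pmf"
  assumes A: "autocratic \<phi> lam sX" shows "autocratic (\<lambda>a b. - \<phi> a b) lam sX"
proof (cases "lam = 1")
  case l: True
  have z: "\<forall>\<sigma>Y :: ('a, 'b) history \<Rightarrow> 'b pmf.
           (\<lambda>T. (\<Sum>t\<le>T. stage_exp sX \<sigma>Y \<phi> t) / real (T + 1)) \<longlonglongrightarrow> 0"
    using A l unfolding autocratic_def by auto
  show ?thesis unfolding autocratic_def
  proof (intro disjI2 conjI allI l)
    fix sY :: "('a, 'b) history \<Rightarrow> 'b pmf"
    have "(\<lambda>T. - ((\<Sum>t\<le>T. stage_exp sX sY \<phi> t) / real (T + 1))) \<longlonglongrightarrow> - 0"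
      using z by (intro tendsto_minus) auto
    then show "(\<lambda>T. (\<Sum>t\<le>T. stage_exp sX sY (\<lambda>a b. - \<phi> a b) t) / real (T + 1)) \<longlonglongrightarrow> 0"
      by (simp add: stage_exp_neg sum_negf)
  qed
next
  case l: False
  have l0: "0 \<le> lam" and l1: "lam < 1"
    and z: "\<forall>\<sigma>Y :: ('a, 'b) history \<Rightarrow> 'b pmf. (1 - lam) * (\<Sum>t. lam ^ t * stage_exp sX \<sigma>Y \<phi> t) = 0"
    using A l unfolding autocratic_def by auto
  show ?thesis unfolding autocratic_def
  proof (intro disjI1 conjI allI l0 l1)
    fix sY :: "('a, 'b) history \<Rightarrow> 'b pmf"
    have "(\<Sum>t. lam ^ t * stage_exp sX sY (\<lambda>a b. - \<phi> a b) t) = - (\<Sum>t. lam ^ t * stage_exp sX sY \<phi> t)"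
      using suminf_minus[OF summ_disc[OF l0 l1, of sX sY \<phi>]] by (simp add: stage_exp_neg)
    moreover have "(\<Sum>t. lam ^ t * stage_exp sX sY \<phi> t) = 0" using z[rule_format, of sY] l1 by simp
    ultimately show "(1 - lam) * (\<Sum>t. lam ^ t * stage_exp sX sY (\<lambda>a b. - \<phi> a b) t) = 0"
      by simp
  qed
qed

theorem proposition13:
  fixes uX uY :: "'a::finite \<Rightarrow> 'b::finite \<Rightarrow> real"
  shows "(\<exists>\<sigma>X :: ('a, 'b) history \<Rightarrow> 'a pmf. zero_sum_autocratic uX uY \<sigma>X) \<longleftrightarrow>
         (\<exists>\<tau>p \<tau>m :: 'a pmf. \<forall>b.
             mixed_ext uX \<tau>p b \<ge> - mixed_ext uY \<tau>p b \<and>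
             mixed_ext uX \<tau>m b \<le> - mixed_ext uY \<tau>m b)"
proof
  assume "\<exists>\<sigma>X :: ('a, 'b) history \<Rightarrow> 'a pmf. zero_sum_autocratic uX uY \<sigma>X"
  then obtain sX :: "('a, 'b) history \<Rightarrow> 'a pmf" and lam
    where a: "autocratic (\<lambda>a b. uX a b + uY a b) lam sX"
    unfolding zero_sum_autocratic_def by blast
  obtain tp :: "'a pmf" where tp: "\<forall>b. mixed_ext (\<lambda>a b. uX a b + uY a b) tp b \<ge> 0"
    using fwd[OF a] by blast
  obtain tm :: "'a pmf" where tm: "\<forall>b. mixed_ext (\<lambda>a b. - (uX a b + uY a b)) tm b \<ge> 0"
    using fwd[OF autocratic_neg[OF a]] by blast
  show "\<exists>\<tau>p \<tau>m :: 'a pmf. \<forall>b.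
             mixed_ext uX \<tau>p b \<ge> - mixed_ext uY \<tau>p b \<and>
             mixed_ext uX \<tau>m b \<le> - mixed_ext uY \<tau>m b"
  proof (rule exI[of _ tp], rule exI[of _ tm], intro allI conjI)
    fix b
    have e1: "mixed_ext (\<lambda>a b. uX a b + uY a b) tp b = mixed_ext uX tp b + mixed_ext uY tp b"
      by (rule mixed_ext_add)
    have e2: "mixed_ext (\<lambda>a b. - (uX a b + uY a b)) tm b = - (mixed_ext uX tm b + mixed_ext uY tm b)"
      by (simp only: mixed_ext_neg[of "\<lambda>a b. uX a b + uY a b"] mixed_ext_add)
    show "mixed_ext uX tp b \<ge> - mixed_ext uY tp b" 
    proof -
      have "0 \<le> mixed_ext (\<lambda>a b. uX a b + uY a b) tp b" using tp by blast
      then have "0 \<le> mixed_ext uX tp b + mixed_ext uY tp b" using e1 by linarith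
      then show ?thesis by linarith
    qed
    show "mixed_ext uX tm b \<le> - mixed_ext uY tm b" 
    proof -
      have "0 \<le> mixed_ext (\<lambda>a b. - (uX a b + uY a b)) tm b" using tm by blast
      then have "0 \<le> - (mixed_ext uX tm b + mixed_ext uY tm b)" using e2 by linarith
      then show ?thesis by linarith
    qed
  qed
next
  assume "\<exists>\<tau>p \<tau>m :: 'a pmf. \<forall>b.
             mixed_ext uX \<tau>p b \<ge> - mixed_ext uY \<tau>p b \<and>
             mixed_ext uX \<tau>m b \<le> - mixed_ext uY \<tau>m b"
  then obtain tp tm :: "'a pmf" where h: "\<forall>b.
             mixed_ext uX tp b \<ge> - mixed_ext uY tp b \<and>
             mixed_ext uX tm b \<le> - mixed_ext uY tm b" by blast
  have "\<exists>sX :: ('a,'b) history \<Rightarrow> 'a pmf. autocratic (\<lambda>a b. uX a b + uY a b) 1 sX"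
  proof (rule bwd[of _ tp tm])
    fix b
    have "- mixed_ext uY tp b \<le> mixed_ext uX tp b" using h by blast
    then show "0 \<le> mixed_ext (\<lambda>a b. uX a b + uY a b) tp b" by (simp add: mixed_ext_add)
    have "mixed_ext uX tm b \<le> - mixed_ext uY tm b" using h by blast
    then show "mixed_ext (\<lambda>a b. uX a b + uY a b) tm b \<le> 0" by (simp add: mixed_ext_add)
  qed
  then obtain sX :: "('a,'b) history \<Rightarrow> 'a pmf" where "autocratic (\<lambda>a b. uX a b + uY a b) 1 sX" by blast
  then have "zero_sum_autocratic uX uY sX"
    unfolding zero_sum_autocratic_def by (rule_tac exI[of _ "1::real"]) simp
  then show "\<exists>\<sigma>X :: ('a, 'b) history \<Rightarrow> 'a pmf. zero_sum_autocratic uX uY \<sigma>X" by blast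
qed

end
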